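(* Let $R$ be an associative ring with identity and involution $*$, and let $a\in R^{\#}\cap R^{\dagger}$. Then $a\in R^{SEP}$ if and only if $aa^*a^{\dagger}a^{\dagger}a^2\in PE(R)$.
   Context: An involution on $R$ is a map $x\mapsto x^*$ with $(x^* )^*=x$, $(x+y)^*=x^*+y^*$, $(xy)^*=y^*x^*$. An element $a$ is Moore–Penrose invertible if there is $b$ with $aba=a$, $bab=b$, $(ab)^*=ab$, $(ba)^*=ba$; such $b$ is unique, denoted $a^{\dagger}$, and $R^{\dagger}$ is the set of such $a$. An element $a$ is group invertible if there is $b$ with $aba=a$, $bab=b$, $ab=ba$; such $b$ is unique, denoted $a^{\#}$, and $R^{\#}$ is the set of such $a$. $PE(R)=\{e\in R: e^2=e=e^*\}$ is the set of projections. For $a\in R^{\#}\cap R^{\dagger}$, $a$ is SEP if $a^*=a^{\dagger}=a^{\#}$; $R^{SEP}$ denotes the set of SEP elements. *)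

theory Defs
  imports Main
begin

text \<open>An involution on a ring, given as a function s (for x \<mapsto> x^*).\<close>
definition involution :: "('a::ring_1 \<Rightarrow> 'a) \<Rightarrow> bool" where
  "involution s \<longleftrightarrow> (\<forall>x. s (s x) = x) \<and> (\<forall>x y. s (x + y) = s x + s y)
     \<and> (\<forall>x y. s (x * y) = s y * s x)"

definition is_MP_inverse :: "('a::ring_1 \<Rightarrow> 'a) \<Rightarrow> 'a \<Rightarrow> 'a \<Rightarrow> bool" where
  "is_MP_inverse s a b \<longleftrightarrow> a * b * a = a \<and> b * a * b = b \<and> s (a * b) = a * b \<and> s (b * a) = b * a"

definition MP_invertible :: "('a::ring_1 \<Rightarrow> 'a) \<Rightarrow> 'a \<Rightarrow> bool" where
  "MP_invertible s a \<longleftrightarrow> (\<exists>b. is_MP_inverse s a b)"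

definition MP_inv :: "('a::ring_1 \<Rightarrow> 'a) \<Rightarrow> 'a \<Rightarrow> 'a" where
  "MP_inv s a = (THE b. is_MP_inverse s a b)"

definition is_group_inverse :: "'a::ring_1 \<Rightarrow> 'a \<Rightarrow> bool" where
  "is_group_inverse a b \<longleftrightarrow> a * b * a = a \<and> b * a * b = b \<and> a * b = b * a"

definition group_invertible :: "'a::ring_1 \<Rightarrow> bool" where
  "group_invertible a \<longleftrightarrow> (\<exists>b. is_group_inverse a b)"

definition group_inv :: "'a::ring_1 \<Rightarrow> 'a" where
  "group_inv a = (THE b. is_group_inverse a b)"

definition projections :: "('a::ring_1 \<Rightarrow> 'a) \<Rightarrow> 'a set" where
  "projections s = {e. e * e = e \<and> e = s e}"

definition SEP :: "('a::ring_1 \<Rightarrow> 'a) \<Rightarrow> 'a \<Rightarrow> bool" where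
  "SEP s a \<longleftrightarrow> group_invertible a \<and> MP_invertible s a \<and>
     s a = MP_inv s a \<and> MP_inv s a = group_inv a"

end

theory Submission
  imports Defs
begin

lemma MP_unique:
  fixes s :: "'a::ring_1 \<Rightarrow> 'a"
  assumes inv: "involution s" and hb: "is_MP_inverse s a b" and hc: "is_MP_inverse s a c"
  shows "b = c"
proof -
  have ss: "\<And>x. s (s x) = x" and sm: "\<And>x y. s (x * y) = s y * s x"
    using inv unfolding involution_def by auto
  have b1: "a*b*a = a" "b*a*b = b" "s (a*b) = a*b" "s (b*a) = b*a"
    using hb unfolding is_MP_inverse_def by auto
  have c1: "a*c*a = a" "c*a*c = c" "s (a*c) = a*c" "s (c*a) = c*a"
    using hc unfolding is_MP_inverse_def by auto
  have "b = b * s (a*b)" using b1 by (simp add: mult.assoc)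
  also have "\<dots> = b * s b * s a" by (simp add: sm mult.assoc)
  also have "\<dots> = b * s b * s (a*c*a)" using c1 by simp
  also have "\<dots> = b * s b * s a * s c * s a" by (simp add: sm mult.assoc)
  also have "\<dots> = b * s (a*b) * s (a*c)" by (simp add: sm mult.assoc)
  also have "\<dots> = b*a*b*a*c" using b1 c1 by (simp add: mult.assoc)
  also have "\<dots> = b*a*c" using b1 by simp
  finally have B: "b = b*a*c" .
  have "c = s (c*a) * c" using c1 by simp
  also have "\<dots> = s a * s c * c" by (simp add: sm)
  also have "\<dots> = s (a*b*a) * s c * c" using b1 by simp
  also have "\<dots> = s a * s b * s a * s c * c" by (simp add: sm mult.assoc)
  also have "\<dots> = s (b*a) * s (c*a) * c" by (simp add: sm mult.assoc)
  also have "\<dots> = b*a*(c*a*c)" using b1 c1 by (simp add: mult.assoc)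
  also have "\<dots> = b*a*c" using c1 by simp
  finally show ?thesis using B by simp
qed

lemma MP_inv_eq:
  fixes s :: "'a::ring_1 \<Rightarrow> 'a"
  assumes "involution s" "is_MP_inverse s a b"
  shows "MP_inv s a = b"
  unfolding MP_inv_def using assms MP_unique by blast

lemma G_unique:
  fixes a :: "'a::ring_1"
  assumes hb: "is_group_inverse a b" and hc: "is_group_inverse a c"
  shows "b = c"
proof -
  have b1: "a*b*a = a" "b*a*b = b" "a*b = b*a"
    using hb unfolding is_group_inverse_def by auto
  have c1: "a*c*a = a" "c*a*c = c" "a*c = c*a"
    using hc unfolding is_group_inverse_def by auto
  have "b = b*b*a" using b1 by (metis mult.assoc)
  also have "\<dots> = b*b*(a*c*a)" using c1 by simp
  also have "\<dots> = (b*b*a)*c*a" by (simp add: mult.assoc)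
  also have "\<dots> = b*c*a" using b1 by (metis mult.assoc)
  also have "\<dots> = b*a*c" using c1 by (metis mult.assoc)
  finally have B: "b = b*a*c" .
  have "c = a*c*c" using c1 by (metis mult.assoc)
  also have "\<dots> = (a*b*a)*c*c" using b1 by simp
  also have "\<dots> = b*a*(a*c*c)" using b1 by (metis mult.assoc)
  also have "\<dots> = b*a*c" using c1 by (metis mult.assoc)
  finally show ?thesis using B by simp
qed

lemma G_inv_eq:
  fixes a :: "'a::ring_1"
  assumes "is_group_inverse a b"
  shows "group_inv a = b"
  unfolding group_inv_def using assms G_unique by blast

theorem theorem2p3:
  fixes s :: "'a::ring_1 \<Rightarrow> 'a" and a :: 'a
  assumes "involution s"
    and "group_invertible a" and "MP_invertible s a"
  shows "SEP s a \<longleftrightarrow> a * s a * MP_inv s a * MP_inv s a * a ^ 2 \<in> projections s"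
proof -
  have ss: "\<And>x. s (s x) = x" and sm: "\<And>x y. s (x * y) = s y * s x"
    using assms(1) unfolding involution_def by auto
  obtain b where hb: "is_MP_inverse s a b" using assms(3) unfolding MP_invertible_def by blast
  obtain g where hg: "is_group_inverse a g" using assms(2) unfolding group_invertible_def by blast
  have Mb: "MP_inv s a = b" using MP_inv_eq[OF assms(1) hb] .
  have Gg: "group_inv a = g" using G_inv_eq[OF hg] .
  have b1: "a*b*a = a" "b*a*b = b" "s (a*b) = a*b" "s (b*a) = b*a"
    using hb unfolding is_MP_inverse_def by auto
  have g1: "a*g*a = a" "g*a*g = g" "a*g = g*a"
    using hg unfolding is_group_inverse_def by auto
  have ga: "g*(a*a) = a" using g1 by (metis mult.assoc)
  have ag: "(a*a)*g = a" using g1 by (metis mult.assoc)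
  have bas: "b*(a*s a) = s a"
  proof -
    have "b*(a*s a) = s (a*s (b*a))" by (simp add: sm ss mult.assoc)
    also have "\<dots> = s a" using b1 by (simp add: mult.assoc)
    finally show ?thesis .
  qed
  have sbsa: "s b * s a = a*b" using b1 by (simp add: sm[symmetric])
  show ?thesis
  proof
    assume "SEP s a"
    hence sa: "s a = b" and bg: "b = g" using Mb Gg unfolding SEP_def by auto
    have e: "a * s a * MP_inv s a * MP_inv s a * a ^ 2 = g*a"
    proof -
      have "a * s a * MP_inv s a * MP_inv s a * a ^ 2 = a*g*g*g*(a*a)"
        using sa bg Mb by (simp add: power2_eq_square)
      also have "\<dots> = a*g*(g*a*g)*a" using g1 by (simp add: mult.assoc)
      also have "\<dots> = (g*a)*(g*a)" using g1 by (metis mult.assoc)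
      also have "\<dots> = g*a" using g1 by (metis mult.assoc)
      finally show ?thesis .
    qed
    have "g*a*(g*a) = g*a" using g1 by (metis mult.assoc)
    moreover have "s (g*a) = g*a" using b1 bg by simp
    ultimately show "a * s a * MP_inv s a * MP_inv s a * a ^ 2 \<in> projections s"
      unfolding e projections_def by simp
  next
    assume P: "a * s a * MP_inv s a * MP_inv s a * a ^ 2 \<in> projections s"
    define e where "e = a * s a * b * b * (a*a)"
    have e2: "e*e = e" and es: "s e = e"
      using P Mb unfolding e_def projections_def by (auto simp: power2_eq_square)
    have pe: "a*b*e = e" unfolding e_def using b1 by (metis mult.assoc)
    have "e = s e" using es by simp
    also have "\<dots> = s (a*b*e)" using pe by simp
    also have "\<dots> = s e * s (a*b)" by (simp add: sm)
    also have "\<dots> = e*(a*b)" using es b1 by simp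
    finally have ep: "e = e*(a*b)" .
    have s1: "a * s a * (b*b*(a*a)) = a * s a * (b*b*(a*a)*(a*b))"
      using ep unfolding e_def by (simp add: mult.assoc)
    have s2: "s a * (b*b*(a*a)) = s a * (b*b*(a*a)*(a*b))"
      using arg_cong[OF s1, of "\<lambda>x. b*x"] bas by (simp add: mult.assoc[symmetric])
    have s3: "a*b*(b*b*(a*a)) = a*b*(b*b*(a*a)*(a*b))"
      using arg_cong[OF s2, of "\<lambda>x. s b*x"] sbsa by (simp add: mult.assoc[symmetric])
    have bbb: "\<And>X. b*(b*(b*X)) = b*(b*(a*(b*(b*X))))" using b1 by (metis mult.assoc)
    define w where "w = a * s (g*a)"
    have wk: "w*(a*b*b*a) = a"
    proof -
      have k1: "s (g*a) * (a*b) = s (g*a)"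
      proof -
        have "s (g*a) * (a*b) = s (g*a) * s (a*b)" using b1 by simp
        also have "\<dots> = s (a*b*(g*a))" by (simp add: sm)
        also have "a*b*(g*a) = a*b*a*g" using g1 by (simp add: mult.assoc)
        also have "\<dots> = a*g" using b1 by simp
        finally show ?thesis using g1 by simp
      qed
      have k2: "s (g*a) * (b*a) = b*a"
      proof -
        have "s (g*a) * (b*a) = s (g*a) * s (b*a)" using b1 by simp
        also have "\<dots> = s (b*a*(g*a))" by (simp add: sm)
        also have "b*a*(g*a) = b*(a*a*g)" using g1 by (simp add: mult.assoc)
        also have "\<dots> = b*a" using ag by simp
        finally show ?thesis using b1 by simp
      qed
      have "w*(a*b*b*a) = a * (s (g*a) * (a*b)) * (b*a)" unfolding w_def by (simp add: mult.assoc)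
      also have "\<dots> = a * (s (g*a) * (b*a))" using k1 by (simp add: mult.assoc)
      also have "\<dots> = a" using k2 b1 by (simp add: mult.assoc)
      finally show ?thesis .
    qed
    have s4: "(a*b*b*a)*(b*b*(a*a)) = (a*b*b*a)*(b*b*(a*a)*(a*b))"
      using s3 bbb by (simp add: mult.assoc)
    have s5: "a*(b*b*(a*a)) = a*(b*b*(a*a)*(a*b))"
      using arg_cong[OF s4, of "\<lambda>x. w*x"] wk by (simp add: mult.assoc[symmetric])
    have s6: "(a*b*b*a)*(a) = (a*b*b*a)*(a*(a*b))"
      using s5 by (simp add: mult.assoc)
    have s7: "a*a = a*(a*(a*b))"
      using arg_cong[OF s6, of "\<lambda>x. w*x"] wk by (simp add: mult.assoc[symmetric])
    have s8: "a = a*(a*b)"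
      using arg_cong[OF s7, of "\<lambda>x. g*x"] ga by (simp add: mult.assoc[symmetric])
    have gab: "g*a = a*b"
      using arg_cong[OF s8, of "\<lambda>x. g*x"] ga by (simp add: mult.assoc[symmetric])
    have "is_MP_inverse s a g"
      unfolding is_MP_inverse_def using g1 gab b1 by simp
    hence bg: "b = g" using MP_unique[OF assms(1) hb] by simp
    have eaa: "e = a * s a"
    proof -
      have "e = a * s a * (b*(g*(a*a)))" unfolding e_def using bg by (simp add: mult.assoc)
      also have "\<dots> = a * s a * (b*a)" using ga by simp
      also have "\<dots> = a * s (b*a*a)" using b1 sm[of "b*a" a] by (simp add: mult.assoc)
      also have "\<dots> = a * s a" using b1 bg g1 by (simp add: mult.assoc)
      finally show ?thesis .
    qed
    have t1: "a * s a * (a * s a) = a * s a" using e2 eaa by simp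
    have t2: "s a * a * s a = s a"
      using arg_cong[OF t1, of "\<lambda>x. b*x"] bas by (simp add: mult.assoc[symmetric])
    have t3: "s a * a = b * a"
    proof -
      have "s a * a = s a * a * s (b*a)" using b1 by (simp add: sm mult.assoc)
      also have "\<dots> = s a * a * s a * s b" by (simp add: sm mult.assoc)
      also have "\<dots> = s (b*a)" using t2 by (simp add: sm)
      finally show ?thesis using b1 by simp
    qed
    have sab: "s a = b"
    proof -
      have "s a = s (a*b*a)" using b1 by simp
      also have "\<dots> = s a * s (a*b)" by (simp add: sm mult.assoc)
      also have "\<dots> = s a * a * b" using b1 by (simp add: mult.assoc)
      also have "\<dots> = b" using t3 b1 by simp
      finally show ?thesis .
    qed
    show "SEP s a" unfolding SEP_def using assms Mb Gg sab bg by simp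
  qed
qed

end
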